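(* Let $P,PA$ be labelings and $c$ a command with $P;PA\vdash_{\mathtt{true}}c$, and let $\rho_1\sim_P\rho_2$, $\mu_1\sim_{PA}\mu_2$. If $\langle c,\rho_1,\mu_1\rangle\approx\langle c,\rho_2,\mu_2\rangle$, then $\langle c,\rho_1,\mu_1,\mathtt{false}\rangle\approx_i\langle c,\rho_2,\mu_2,\mathtt{false}\rangle$, i.e., for every directive list $D$ and observation lists $O_1,O_2$, if $\langle c,\rho_k,\mu_k,\mathtt{false}\rangle\xrightarrow[D]{O_k}{}_i^*$ some configuration for $k=1,2$ (ideal semantics w.r.t. $P$), then $O_1=O_2$.
   Context: Language AWhile: scalar variables $X\in\mathcal V$, arrays $a\in\mathcal A$; $e::=n\mid X\mid\mathrm{op}_{\mathbb N}(e,\dots,e)\mid be\,?\,e_1:e_2$; $be::=\mathtt{true}\mid\mathtt{false}\mid\mathrm{cmp}(e,e)\mid\mathrm{op}_{\mathbb B}(be,\dots,be)$; $c::=\mathtt{skip}\mid X:=e\mid c_1;c_2\mid\mathtt{if}\ be\ \mathtt{then}\ c_1\ \mathtt{else}\ c_2\mid\mathtt{while}\ be\ \mathtt{do}\ c\mid X\leftarrow a[e]\mid a[e]\leftarrow e'$. Scalar state $\rho:\mathcal V\to\mathbb N$; array state $\mu$ with sizes $|a|_\mu$ and values $\mu(a)[i]$; $[\![\cdot]\!]_\rho$ pure evaluation. Sequential semantics: steps $\langle c,\rho,\mu\rangle\xrightarrow{o}\langle c',\rho',\mu'\rangle$ with optional observation: $X:=e\to\mathtt{skip}$ updating $X$;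 $c_1;c_2\xrightarrow{o}c_1';c_2$ if $c_1\xrightarrow{o}c_1'$; $\mathtt{skip};c\to c$; conditional goes to branch $v=[\![be]\!]_\rho$ observing $\mathrm{branch}(v)$; $\mathtt{while}\ be\ \mathtt{do}\ c\to\mathtt{if}\ be\ \mathtt{then}\ (c;\mathtt{while}\ be\ \mathtt{do}\ c)\ \mathtt{else}\ \mathtt{skip}$; $X\leftarrow a[ie]$ with $i=[\![ie]\!]_\rho<|a|_\mu$ sets $X:=\mu(a)[i]$ observing $\mathrm{read}(a,i)$; $a[ie]\leftarrow e$ with $i<|a|_\mu$ sets $\mu[a[i]\mapsto[\![e]\!]_\rho]$ observing $\mathrm{write}(a,i)$. $\langle c_1,\rho_1,\mu_1\rangle\approx\langle c_2,\rho_2,\mu_2\rangle$ iff for all multi-step executions $\langle c_k,\rho_k,\mu_k\rangle\xrightarrow{O_k}{}^*$ (any prefix), one of $O_1,O_2$ is a prefix of the other. Labels: $\mathtt{true}$=public, $\mathtt{false}$=secret; $\ell_1\sqsubseteq\ell_2$ iff $\ell_2=\mathtt{true}\Rightarrow\ell_1=\mathtt{true}$; $\ell_1\sqcup\ell_2=\ell_1\wedge\ell_2$. $P(e),P(be)$ public iff all variables occurring are public. $\rho_1\sim_P\rho_2$ iff agreement on public scalar variables; $\mu_1\sim_{PA}\mu_2$ iff agreement on sizes and contents of public arrays. IFC typing $P;PA\vdash_{pc}c$: $\mathtt{skip}$; $X:=e$ if $pc\sqcup P(e)\sqsubseteq P(X)$; $c_1;c_2$ if both typed under $pc$; $\mathtt{if}$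 if both branches typed under $pc\sqcup P(be)$; $\mathtt{while}$ if body typed under $pc\sqcup P(be)$; $X\leftarrow a[i]$ if $pc\sqcup P(i)\sqcup PA(a)\sqsubseteq P(X)$; $a[i]\leftarrow e$ if $pc\sqcup P(i)\sqcup P(e)\sqsubseteq PA(a)$. Ideal semantics w.r.t. $P$: configurations $\langle c,\rho,\mu,\beta\rangle$; steps with optional observation and optional directive $d\in\{\mathit{step},\mathit{force},\mathrm{load}(a',j),\mathrm{store}(a',j)\}$. Non-observing rules as sequentially (flag kept, no directive). Conditional: $v=(P(be)\vee\neg\beta)\wedge[\![be]\!]_\rho$; $\mathit{step}$ goes to branch $v$; $\mathit{force}$ goes to branch $\neg v$ and sets $\beta:=\mathtt{true}$; obs $\mathrm{branch}(v)$. Read $X\leftarrow a[ie]$ with $\mathit{step}$: $i=0$ if $(P(ie)=\mathtt{false}\vee P(X)=\mathtt{true})\wedge\beta$, else $[\![ie]\!]_\rho$; requires $i<|a|_\mu$; $X:=\mu(a)[i]$; obs $\mathrm{read}(a,i)$. Read with $\mathrm{load}(a',j)$: requires $\beta=\mathtt{true}$, $P(ie)=\mathtt{true}$, $P(X)=\mathtt{false}$, $i=[\![ie]\!]_\rho\ge|a|_\mu$, $j<|a'|_\mu$; $X:=\mu(a')[j]$; obs $\mathrm{read}(a,i)$. Write $a[ie]\leftarrow ae$ with $\mathit{step}$: $i=0$ if $(P(ie)=\mathtt{false}\vee P(ae)=\mathtt{false})\wedge\beta$, else $[\![ie]\!]_\rho$; requires $i<|a|_\mu$; $\mu[a[i]\mapsto[\![ae]\!]_\rho]$;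 obs $\mathrm{write}(a,i)$. Write with $\mathrm{store}(a',j)$: requires $\beta=\mathtt{true}$, $P(ie)=P(ae)=\mathtt{true}$, $i\ge|a|_\mu$, $j<|a'|_\mu$; $\mu[a'[j]\mapsto[\![ae]\!]_\rho]$; obs $\mathrm{write}(a,i)$. Multi-step $\xrightarrow[D]{O}{}_i^*$ collects directives and observations. *)

theory Defs
  imports Main "HOL-Library.Sublist"
begin

type_synonym vname = string
type_synonym aname = string
type_synonym state = "vname \<Rightarrow> nat"
type_synonym astate = "aname \<Rightarrow> nat list"
type_synonym label = bool  \<comment> \<open>True = public, False = secret\<close>

datatype aexp = Num nat | V vname | Op "nat list \<Rightarrow> nat" "aexp list" | Ite bexp aexp aexp
and bexp = Tru | Fls | Cmp "nat \<Rightarrow> nat \<Rightarrow> bool" aexp aexp | BOp "bool list \<Rightarrow> bool" "bexp list"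

datatype com = SKIP | Assign vname aexp | Seq com com | If bexp com com | While bexp com
  | ARead vname aname aexp | AWrite aname aexp aexp

primrec aval :: "aexp \<Rightarrow> state \<Rightarrow> nat" and bval :: "bexp \<Rightarrow> state \<Rightarrow> bool" where
  "aval (Num n) s = n"
| "aval (V x) s = s x"
| "aval (Op f es) s = f (map (\<lambda>e. aval e s) es)"
| "aval (Ite b e1 e2) s = (if bval b s then aval e1 s else aval e2 s)"
| "bval Tru s = True"
| "bval Fls s = False"
| "bval (Cmp f e1 e2) s = f (aval e1 s) (aval e2 s)"
| "bval (BOp f bs) s = f (map (\<lambda>b. bval b s) bs)"

primrec avars :: "aexp \<Rightarrow> vname set" and bvars :: "bexp \<Rightarrow> vname set" where
  "avars (Num n) = {}"
| "avars (V x) = {x}"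
| "avars (Op f es) = \<Union> (set (map avars es))"
| "avars (Ite b e1 e2) = bvars b \<union> avars e1 \<union> avars e2"
| "bvars Tru = {}"
| "bvars Fls = {}"
| "bvars (Cmp f e1 e2) = avars e1 \<union> avars e2"
| "bvars (BOp f bs) = \<Union> (set (map bvars bs))"

definition Pa :: "(vname \<Rightarrow> label) \<Rightarrow> aexp \<Rightarrow> label" where
  "Pa P e = (\<forall>x\<in>avars e. P x)"
definition Pb :: "(vname \<Rightarrow> label) \<Rightarrow> bexp \<Rightarrow> label" where
  "Pb P b = (\<forall>x\<in>bvars b. P x)"

definition lle :: "label \<Rightarrow> label \<Rightarrow> bool" where
  "lle l1 l2 = (l2 \<longrightarrow> l1)"
definition ljoin :: "label \<Rightarrow> label \<Rightarrow> label" where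
  "ljoin l1 l2 = (l1 \<and> l2)"

definition sim_P :: "(vname \<Rightarrow> label) \<Rightarrow> state \<Rightarrow> state \<Rightarrow> bool" where
  "sim_P P r1 r2 = (\<forall>x. P x \<longrightarrow> r1 x = r2 x)"
definition sim_PA :: "(aname \<Rightarrow> label) \<Rightarrow> astate \<Rightarrow> astate \<Rightarrow> bool" where
  "sim_PA PA m1 m2 = (\<forall>a. PA a \<longrightarrow> m1 a = m2 a)"

datatype obs = OBranch bool | ORead aname nat | OWrite aname nat
datatype dir = DStep | DForce | DLoad aname nat | DStore aname nat

definition olist :: "'a option \<Rightarrow> 'a list" where
  "olist o' = (case o' of None \<Rightarrow> [] | Some x \<Rightarrow> [x])"

inductive sstep :: "com \<Rightarrow> state \<Rightarrow> astate \<Rightarrow> obs option \<Rightarrow> com \<Rightarrow> state \<Rightarrow> astate \<Rightarrow> bool" where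
  sAssign: "sstep (Assign x e) r m None SKIP (r(x := aval e r)) m"
| sSeq: "sstep c1 r m o' c1' r' m' \<Longrightarrow> sstep (Seq c1 c2) r m o' (Seq c1' c2) r' m'"
| sSkip: "sstep (Seq SKIP c) r m None c r m"
| sIf: "v = bval b r \<Longrightarrow> sstep (If b c1 c2) r m (Some (OBranch v)) (if v then c1 else c2) r m"
| sWhile: "sstep (While b c) r m None (If b (Seq c (While b c)) SKIP) r m"
| sRead: "i = aval ie r \<Longrightarrow> i < length (m a) \<Longrightarrow>
    sstep (ARead x a ie) r m (Some (ORead a i)) SKIP (r(x := m a ! i)) m"
| sWrite: "i = aval ie r \<Longrightarrow> i < length (m a) \<Longrightarrow>
    sstep (AWrite a ie e) r m (Some (OWrite a i)) SKIP r (m(a := (m a)[i := aval e r]))"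

inductive ssteps :: "com \<Rightarrow> state \<Rightarrow> astate \<Rightarrow> obs list \<Rightarrow> com \<Rightarrow> state \<Rightarrow> astate \<Rightarrow> bool" where
  ssRefl: "ssteps c r m [] c r m"
| ssStep: "sstep c r m o' c' r' m' \<Longrightarrow> ssteps c' r' m' Os c'' r'' m'' \<Longrightarrow>
    ssteps c r m (olist o' @ Os) c'' r'' m''"

definition seq_equiv :: "com \<Rightarrow> state \<Rightarrow> astate \<Rightarrow> com \<Rightarrow> state \<Rightarrow> astate \<Rightarrow> bool" where
  "seq_equiv c1 r1 m1 c2 r2 m2 = (\<forall>O1 O2 c1' r1' m1' c2' r2' m2'.
     ssteps c1 r1 m1 O1 c1' r1' m1' \<longrightarrow> ssteps c2 r2 m2 O2 c2' r2' m2' \<longrightarrow>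
     prefix O1 O2 \<or> prefix O2 O1)"

inductive typed :: "(vname \<Rightarrow> label) \<Rightarrow> (aname \<Rightarrow> label) \<Rightarrow> label \<Rightarrow> com \<Rightarrow> bool" where
  tSkip: "typed P PA pc SKIP"
| tAssign: "lle (ljoin pc (Pa P e)) (P x) \<Longrightarrow> typed P PA pc (Assign x e)"
| tSeq: "typed P PA pc c1 \<Longrightarrow> typed P PA pc c2 \<Longrightarrow> typed P PA pc (Seq c1 c2)"
| tIf: "typed P PA (ljoin pc (Pb P b)) c1 \<Longrightarrow> typed P PA (ljoin pc (Pb P b)) c2 \<Longrightarrow>
    typed P PA pc (If b c1 c2)"
| tWhile: "typed P PA (ljoin pc (Pb P b)) c \<Longrightarrow> typed P PA pc (While b c)"
| tRead: "lle (ljoin (ljoin pc (Pa P i)) (PA a)) (P x) \<Longrightarrow> typed P PA pc (ARead x a i)"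
| tWrite: "lle (ljoin (ljoin pc (Pa P i)) (Pa P e)) (PA a) \<Longrightarrow> typed P PA pc (AWrite a i e)"

inductive istep :: "(vname \<Rightarrow> label) \<Rightarrow> com \<Rightarrow> state \<Rightarrow> astate \<Rightarrow> bool \<Rightarrow> obs option \<Rightarrow> dir option
    \<Rightarrow> com \<Rightarrow> state \<Rightarrow> astate \<Rightarrow> bool \<Rightarrow> bool" where
  iAssign: "istep P (Assign x e) r m \<beta> None None SKIP (r(x := aval e r)) m \<beta>"
| iSeq: "istep P c1 r m \<beta> o' d c1' r' m' \<beta>' \<Longrightarrow> istep P (Seq c1 c2) r m \<beta> o' d (Seq c1' c2) r' m' \<beta>'"
| iSkip: "istep P (Seq SKIP c) r m \<beta> None None c r m \<beta>"
| iWhile: "istep P (While b c) r m \<beta> None None (If b (Seq c (While b c)) SKIP) r m \<beta>"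
| iIfStep: "v = ((Pb P b \<or> \<not> \<beta>) \<and> bval b r) \<Longrightarrow>
    istep P (If b c1 c2) r m \<beta> (Some (OBranch v)) (Some DStep) (if v then c1 else c2) r m \<beta>"
| iIfForce: "v = ((Pb P b \<or> \<not> \<beta>) \<and> bval b r) \<Longrightarrow>
    istep P (If b c1 c2) r m \<beta> (Some (OBranch v)) (Some DForce) (if \<not> v then c1 else c2) r m True"
| iReadStep: "i = (if (\<not> Pa P ie \<or> P x) \<and> \<beta> then 0 else aval ie r) \<Longrightarrow> i < length (m a) \<Longrightarrow>
    istep P (ARead x a ie) r m \<beta> (Some (ORead a i)) (Some DStep) SKIP (r(x := m a ! i)) m \<beta>"
| iReadLoad: "\<beta> \<Longrightarrow> Pa P ie \<Longrightarrow> \<not> P x \<Longrightarrow> i = aval ie r \<Longrightarrow> i \<ge> length (m a) \<Longrightarrow> j < length (m a') \<Longrightarrow>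
    istep P (ARead x a ie) r m \<beta> (Some (ORead a i)) (Some (DLoad a' j)) SKIP (r(x := m a' ! j)) m \<beta>"
| iWriteStep: "i = (if (\<not> Pa P ie \<or> \<not> Pa P e) \<and> \<beta> then 0 else aval ie r) \<Longrightarrow> i < length (m a) \<Longrightarrow>
    istep P (AWrite a ie e) r m \<beta> (Some (OWrite a i)) (Some DStep) SKIP r (m(a := (m a)[i := aval e r])) \<beta>"
| iWriteStore: "\<beta> \<Longrightarrow> Pa P ie \<Longrightarrow> Pa P e \<Longrightarrow> i = aval ie r \<Longrightarrow> i \<ge> length (m a) \<Longrightarrow> j < length (m a') \<Longrightarrow>
    istep P (AWrite a ie e) r m \<beta> (Some (OWrite a i)) (Some (DStore a' j)) SKIP r (m(a' := (m a')[j := aval e r])) \<beta>"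

inductive isteps :: "(vname \<Rightarrow> label) \<Rightarrow> com \<Rightarrow> state \<Rightarrow> astate \<Rightarrow> bool \<Rightarrow> dir list \<Rightarrow> obs list
    \<Rightarrow> com \<Rightarrow> state \<Rightarrow> astate \<Rightarrow> bool \<Rightarrow> bool" where
  isRefl: "isteps P c r m \<beta> [] [] c r m \<beta>"
| isStep: "istep P c r m \<beta> o' d c' r' m' \<beta>' \<Longrightarrow> isteps P c' r' m' \<beta>' D Os c'' r'' m'' \<beta>'' \<Longrightarrow>
    isteps P c r m \<beta> (olist d @ D) (olist o' @ Os) c'' r'' m'' \<beta>''"

definition ideal_equiv :: "(vname \<Rightarrow> label) \<Rightarrow> com \<Rightarrow> state \<Rightarrow> astate \<Rightarrow> bool \<Rightarrow> com \<Rightarrow> state \<Rightarrow> astate \<Rightarrow> bool \<Rightarrow> bool" where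
  "ideal_equiv P c1 r1 m1 b1 c2 r2 m2 b2 = (\<forall>D O1 O2 c1' r1' m1' b1' c2' r2' m2' b2'.
     isteps P c1 r1 m1 b1 D O1 c1' r1' m1' b1' \<longrightarrow> isteps P c2 r2 m2 b2 D O2 c2' r2' m2' b2' \<longrightarrow>
     O1 = O2)"

end

theory Submission
  imports Defs
begin

lemma aval_eq_bval_eq:
  "(\<forall>x\<in>avars e. r1 x = r2 x) \<Longrightarrow> aval e r1 = aval e r2"
  "(\<forall>x\<in>bvars b. r1 x = r2 x) \<Longrightarrow> bval b r1 = bval b r2"
proof (induction e and b)
  case (Op f es)
  have "map (\<lambda>e. aval e r1) es = map (\<lambda>e. aval e r2) es"
  proof (rule map_cong[OF refl])
    fix e assume e: "e \<in> set es"
    show "aval e r1 = aval e r2"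
      by (rule Op.IH[OF e]) (use Op.prems e in auto)
  qed
  then show ?case unfolding aval.simps by (rule arg_cong)
next
  case (BOp f bs)
  have "map (\<lambda>b. bval b r1) bs = map (\<lambda>b. bval b r2) bs"
  proof (rule map_cong[OF refl])
    fix b assume b: "b \<in> set bs"
    show "bval b r1 = bval b r2"
      by (rule BOp.IH[OF b]) (use BOp.prems b in auto)
  qed
  then show ?case unfolding bval.simps by (rule arg_cong)
qed auto

lemma aval_pub: "Pa P e \<Longrightarrow> sim_P P r1 r2 \<Longrightarrow> aval e r1 = aval e r2"
  by (rule aval_eq_bval_eq(1)) (auto simp: Pa_def sim_P_def)

lemma bval_pub: "Pb P b \<Longrightarrow> sim_P P r1 r2 \<Longrightarrow> bval b r1 = bval b r2"
  by (rule aval_eq_bval_eq(2)) (auto simp: Pb_def sim_P_def)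

lemma typed_mono: "typed P PA pc c \<Longrightarrow> (pc \<longrightarrow> pc') \<Longrightarrow> typed P PA pc' c"
proof (induction arbitrary: pc' rule: typed.induct)
  case (tIf pc b c1 c2)
  then show ?case by (intro typed.tIf) (auto simp: ljoin_def)
next
  case (tWhile pc b c)
  then show ?case by (intro typed.tWhile) (auto simp: ljoin_def)
qed (auto simp: lle_def ljoin_def intro: typed.intros)

lemma typed_True: "typed P PA pc c \<Longrightarrow> typed P PA True c"
  using typed_mono by blast

inductive_cases TSeq: "typed P PA pc (Seq c1 c2)"
inductive_cases TIf: "typed P PA pc (If b c1 c2)"
inductive_cases TWhile: "typed P PA pc (While b c)"
inductive_cases TAssign: "typed P PA pc (Assign x e)"
inductive_cases TRead: "typed P PA pc (ARead x a i)"
inductive_cases TWrite: "typed P PA pc (AWrite a i e)"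

inductive_cases ISkipE: "istep P SKIP r m b ob d c' r' m' b'"
inductive_cases ISeqE: "istep P (Seq c1 c2) r m b ob d c' r' m' b'"
inductive_cases IIfE: "istep P (If bb c1 c2) r m b ob d c' r' m' b'"
inductive_cases IWhileE: "istep P (While bb c) r m b ob d c' r' m' b'"
inductive_cases IAssignE: "istep P (Assign x e) r m b ob d c' r' m' b'"
inductive_cases IReadE: "istep P (ARead x a ie) r m b ob d c' r' m' b'"
inductive_cases IWriteE: "istep P (AWrite a ie e) r m b ob d c' r' m' b'"

lemma istep_none: "istep P c r m b ob d c' r' m' b' \<Longrightarrow> (d = None \<longleftrightarrow> ob = None)"
  by (induction rule: istep.induct) auto

fun silent :: "com \<Rightarrow> bool" where
  "silent (Assign x e) = True"
| "silent (Seq c1 c2) = (if c1 = SKIP then True else silent c1)"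
| "silent (While b c) = True"
| "silent _ = False"

lemma istep_notskip: "istep P c r m b ob d c' r' m' b' \<Longrightarrow> c \<noteq> SKIP"
  by (erule istep.cases) auto

lemma istep_silent: "istep P c r m b ob d c' r' m' b' \<Longrightarrow> (d = None \<longleftrightarrow> silent c)"
  by (induction rule: istep.induct) (auto dest: istep_notskip)

lemma istep_kind:
  "istep P c r1 m1 b1 ob1 d1 c1' r1' m1' b1' \<Longrightarrow> istep P c r2 m2 b2 ob2 d2 c2' r2' m2' b2'
   \<Longrightarrow> (d1 = None \<longleftrightarrow> d2 = None)"
  using istep_silent by metis

lemma isteps_len: "isteps P c r m b D Os c' r' m' b' \<Longrightarrow> length D = length Os"
  by (induction rule: isteps.induct) (auto simp: olist_def dest!: istep_none split: option.splits)

lemma sIf_T: "bval b r \<Longrightarrow> sstep (If b c1 c2) r m (Some (OBranch True)) c1 r m"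
  using sIf[of True b r c1 c2 m] by simp
lemma sIf_F: "\<not> bval b r \<Longrightarrow> sstep (If b c1 c2) r m (Some (OBranch False)) c2 r m"
  using sIf[of False b r c1 c2 m] by simp

lemma exI3: "sstep c r m ob c'' r'' m'' \<Longrightarrow> Q c'' r'' m'' \<Longrightarrow>
  \<exists>c'' r'' m''. sstep c r m ob c'' r'' m'' \<and> Q c'' r'' m''"
  by blast

lemma istep_seq:
  "istep P c r m \<beta> ob d c' r' m' b' \<Longrightarrow> \<beta> = False \<Longrightarrow>
   \<exists>c'' r'' m''. sstep c r m ob c'' r'' m'' \<and>
     (d \<noteq> Some DForce \<longrightarrow> c''=c' \<and> r''=r' \<and> m''=m' \<and> b'=False) \<and>
     (d = Some DForce \<longrightarrow> b' = True)"
proof (induction rule: istep.induct)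
  case (iSeq P c1 r m \<beta> o' d c1' r' m' \<beta>' c2)
  from iSeq.IH[OF iSeq.prems] obtain c'' r'' m'' where
    s: "sstep c1 r m o' c'' r'' m''" and
    h: "(d \<noteq> Some DForce \<longrightarrow> c''=c1' \<and> r''=r' \<and> m''=m' \<and> \<beta>'=False) \<and> (d = Some DForce \<longrightarrow> \<beta>' = True)"
    by blast
  show ?case
    by (rule exI3[OF sSeq[OF s]]) (use h in simp)
next
  case (iIfForce v P b \<beta> r c1 c2 m)
  then have "sstep (If b c1 c2) r m (Some (OBranch v)) (if v then c1 else c2) r m"
    by (intro sIf) simp
  then show ?case by (rule exI3) (use iIfForce in simp)
next
  case (iIfStep v P b \<beta> r c1 c2 m)
  then have "sstep (If b c1 c2) r m (Some (OBranch v)) (if v then c1 else c2) r m"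
    by (intro sIf) simp
  then show ?case by (rule exI3) (use iIfStep in simp)
next
  case (iAssign P x e r m \<beta>)
  show ?case by (rule exI3[OF sAssign]) (use iAssign in simp)
next
  case (iSkip P c r m \<beta>)
  show ?case by (rule exI3[OF sSkip]) (use iSkip in simp)
next
  case (iWhile P b c r m \<beta>)
  show ?case by (rule exI3[OF sWhile]) (use iWhile in simp)
next
  case (iReadStep i P ie x \<beta> r m a)
  then have "sstep (ARead x a ie) r m (Some (ORead a i)) SKIP (r(x := m a ! i)) m"
    by (intro sRead) simp_all
  then show ?case by (rule exI3) (use iReadStep in simp)
next
  case (iWriteStep i P ie e \<beta> r m a)
  then have "sstep (AWrite a ie e) r m (Some (OWrite a i)) SKIP r (m(a := (m a)[i := aval e r]))"
    by (intro sWrite) simp_all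
  then show ?case by (rule exI3) (use iWriteStep in simp)
qed simp_all

lemma seq_equiv_step:
  "sstep c r1 m1 ob c' r1' m1' \<Longrightarrow> sstep c r2 m2 ob c' r2' m2' \<Longrightarrow>
   seq_equiv c r1 m1 c r2 m2 \<Longrightarrow> seq_equiv c' r1' m1' c' r2' m2'"
  unfolding seq_equiv_def
proof (intro allI impI)
  fix O1 O2 c1' r1'' m1'' c2' r2'' m2''
  assume s1: "sstep c r1 m1 ob c' r1' m1'" and s2: "sstep c r2 m2 ob c' r2' m2'"
    and eq: "\<forall>O1 O2 c1' r1' m1' c2' r2' m2'. ssteps c r1 m1 O1 c1' r1' m1' \<longrightarrow>
       ssteps c r2 m2 O2 c2' r2' m2' \<longrightarrow> prefix O1 O2 \<or> prefix O2 O1"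
    and t1: "ssteps c' r1' m1' O1 c1' r1'' m1''" and t2: "ssteps c' r2' m2' O2 c2' r2'' m2''"
  have "prefix (olist ob @ O1) (olist ob @ O2) \<or> prefix (olist ob @ O2) (olist ob @ O1)"
    using eq[rule_format, OF ssStep[OF s1 t1] ssStep[OF s2 t2]] .
  then show "prefix O1 O2 \<or> prefix O2 O1" by simp
qed

lemma lock:
  "istep P c r1 m1 b ob1 d1 c1' r1' m1' b1' \<Longrightarrow> istep P c r2 m2 b ob2 d2 c2' r2' m2' b2' \<Longrightarrow>
   typed P PA True c \<Longrightarrow> sim_P P r1 r2 \<Longrightarrow> sim_PA PA m1 m2 \<Longrightarrow> d1 = d2 \<Longrightarrow> (b \<or> ob1 = ob2) \<Longrightarrow>
   ob1 = ob2 \<and> c1' = c2' \<and> b1' = b2' \<and> sim_P P r1' r2' \<and> sim_PA PA m1' m2' \<and> typed P PA True c1'"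
proof (induction arbitrary: r2 m2 ob2 d2 c2' r2' m2' b2' rule: istep.induct)
  case (iAssign P x e r m \<beta>)
  from iAssign.prems(2) have "P x \<longrightarrow> Pa P e" by (auto elim: TAssign simp: lle_def ljoin_def)
  moreover have "Pa P e \<Longrightarrow> aval e r = aval e r2" using aval_pub[OF _ iAssign.prems(3)] .
  ultimately show ?case using iAssign.prems
    by (auto elim!: IAssignE simp: sim_P_def intro: typed.intros)
next
  case (iSeq P c1 r m \<beta> o' d c1' r' m' \<beta>' c2)
  from iSeq.prems(2) have t1: "typed P PA True c1" and t2: "typed P PA True c2" by (auto elim: TSeq)
  from iSeq.prems(1) show ?case
  proof (rule ISeqE)
    fix c1'a assume eqs: "c2' = Seq c1'a c2"
      and st: "istep P c1 r2 m2 \<beta> ob2 d2 c1'a r2' m2' b2'"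
    from iSeq.IH[OF st t1 iSeq.prems(3-6)] t2 eqs show ?thesis
      by (auto intro: typed.intros)
  next
    assume "c1 = SKIP" with iSeq.hyps show ?thesis by (auto elim: ISkipE)
  qed
next
  case (iSkip P c r m \<beta>)
  from iSkip.prems(1) show ?case
    by (rule ISeqE) (use iSkip.prems in \<open>auto elim: ISkipE TSeq\<close>)
next
  case (iWhile P b c r m \<beta>)
  from iWhile.prems(2) have tc: "typed P PA (Pb P b) c" by (auto elim: TWhile simp: ljoin_def)
  have "typed P PA True (If b (Seq c (While b c)) SKIP)"
    by (rule tIf) (use tc in \<open>auto simp: ljoin_def intro!: typed.intros\<close>)
  with iWhile show ?case by (auto elim: IWhileE)
next
  case (iIfStep v P b \<beta> r c1 c2 m)
  have vv: "Pb P b \<Longrightarrow> bval b r = bval b r2"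
    using bval_pub[OF _ iIfStep.prems(3)] by auto
  from iIfStep.prems(2) have "typed P PA True c1" "typed P PA True c2"
    by (auto elim!: TIf intro: typed_True)
  with iIfStep vv show ?case by (auto elim!: IIfE)
next
  case (iIfForce v P b \<beta> r c1 c2 m)
  have vv: "Pb P b \<Longrightarrow> bval b r = bval b r2"
    using bval_pub[OF _ iIfForce.prems(3)] by auto
  from iIfForce.prems(2) have "typed P PA True c1" "typed P PA True c2"
    by (auto elim!: TIf intro: typed_True)
  with iIfForce vv show ?case by (auto elim!: IIfE)
next
  case (iReadStep i P ie x \<beta> r m a)
  from iReadStep.prems(2) have ty: "P x \<longrightarrow> Pa P ie \<and> PA a" by (auto elim: TRead simp: lle_def ljoin_def)
  have ae: "Pa P ie \<Longrightarrow> aval ie r = aval ie r2" using aval_pub[OF _ iReadStep.prems(3)] .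
  show ?case using iReadStep ty ae
    by (auto elim!: IReadE simp: sim_P_def sim_PA_def intro: typed.intros split: if_splits)
next
  case (iReadLoad \<beta> P ie x i r m a j a')
  have ae: "Pa P ie \<Longrightarrow> aval ie r = aval ie r2" using aval_pub[OF _ iReadLoad.prems(3)] .
  show ?case using iReadLoad ae
    by (auto elim!: IReadE simp: sim_P_def intro: typed.intros)
next
  case (iWriteStep i P ie e \<beta> r m a)
  from iWriteStep.prems(2) have ty: "PA a \<longrightarrow> Pa P ie \<and> Pa P e" by (auto elim: TWrite simp: lle_def ljoin_def)
  have ae: "Pa P ie \<Longrightarrow> aval ie r = aval ie r2" using aval_pub[OF _ iWriteStep.prems(3)] .
  have ae2: "Pa P e \<Longrightarrow> aval e r = aval e r2" using aval_pub[OF _ iWriteStep.prems(3)] .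
  show ?case using iWriteStep ty ae ae2
    by (auto elim!: IWriteE simp: sim_PA_def intro: typed.intros split: if_splits)
next
  case (iWriteStore \<beta> P ie e i r m a j a')
  have ae: "Pa P ie \<Longrightarrow> aval ie r = aval ie r2" using aval_pub[OF _ iWriteStore.prems(3)] .
  have ae2: "Pa P e \<Longrightarrow> aval e r = aval e r2" using aval_pub[OF _ iWriteStore.prems(3)] .
  show ?case using iWriteStore ae ae2
    by (auto elim!: IWriteE simp: sim_PA_def intro: typed.intros)
qed


lemma istep_mono: "istep P c r m b ob d c' r' m' b' \<Longrightarrow> b \<longrightarrow> b'"
  by (induction rule: istep.induct) auto

lemma olist_eq: "(d1 = None \<longleftrightarrow> d2 = None) \<Longrightarrow> olist d1 @ D1 = olist d2 @ D2 \<Longrightarrow> d1 = d2 \<and> D1 = D2"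
  by (cases d1; cases d2) (auto simp: olist_def)

lemma main:
  "isteps P c r1 m1 b D O1 c1' r1' m1' b1' \<Longrightarrow> isteps P c r2 m2 b D O2 c2' r2' m2' b2' \<Longrightarrow>
   typed P PA True c \<Longrightarrow> sim_P P r1 r2 \<Longrightarrow> sim_PA PA m1 m2 \<Longrightarrow>
   (\<not> b \<longrightarrow> seq_equiv c r1 m1 c r2 m2) \<Longrightarrow> O1 = O2"
proof (induction arbitrary: r2 m2 O2 c2' r2' m2' b2' rule: isteps.induct)
  case (isRefl P c r m \<beta>)
  from isteps_len[OF isRefl.prems(1)] show ?case by simp
next
  case (isStep P c r m \<beta> ob d c' r' m' \<beta>' D Os c'' r'' m'' \<beta>'')
  from isStep.prems(1) show ?case
  proof (cases rule: isteps.cases)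
    case isRefl
    then have "d = None" "D = []" by (auto simp: olist_def split: option.splits)
    with istep_none[OF isStep.hyps(1)] isteps_len[OF isStep.hyps(2)] isRefl show ?thesis
      by (simp add: olist_def)
  next
    case (isStep ob2 d2 c2 r2a m2a b2a D2 Os2)
    note st1 = isStep.hyps(1) and st2 = isStep(3)
    have dd: "d = d2" and DD: "D = D2"
      using olist_eq[OF istep_kind[OF st1 st2] isStep(1)] by auto
    have oo: "ob = ob2"
    proof (cases \<beta>)
      case True
      from lock[OF st1 st2 isStep.prems(2-4) dd] True show ?thesis by blast
    next
      case False
      from istep_seq[OF st1] False obtain x1 y1 z1 where s1: "sstep c r m ob x1 y1 z1" by blast
      from istep_seq[OF st2] False obtain x2 y2 z2 where s2: "sstep c r2 m2 ob2 x2 y2 z2" by blast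
      have se: "seq_equiv c r m c r2 m2" using isStep.prems(5) False by simp
      have "prefix (olist ob @ []) (olist ob2 @ []) \<or> prefix (olist ob2 @ []) (olist ob @ [])"
        using se[unfolded seq_equiv_def, rule_format, OF ssStep[OF s1 ssRefl] ssStep[OF s2 ssRefl]] .
      moreover have "ob = None \<longleftrightarrow> ob2 = None"
        using istep_none[OF st1] istep_none[OF st2] dd by simp
      ultimately show ?thesis by (cases ob; cases ob2) (auto simp: olist_def)
    qed
    have L: "c' = c2 \<and> \<beta>' = b2a \<and> sim_P P r' r2a \<and> sim_PA PA m' m2a \<and> typed P PA True c'"
      using lock[OF st1 st2 isStep.prems(2-4) dd] oo by blast
    have SE: "\<not> \<beta>' \<longrightarrow> seq_equiv c' r' m' c' r2a m2a"
    proof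
      assume nb: "\<not> \<beta>'"
      with istep_mono[OF st1] have nb0: "\<not> \<beta>" by blast
      from istep_seq[OF st1] nb0 nb obtain x1 y1 z1 where
        s1: "sstep c r m ob x1 y1 z1" and h1: "d \<noteq> Some DForce \<longrightarrow> x1 = c' \<and> y1 = r' \<and> z1 = m'"
        and f1: "d = Some DForce \<longrightarrow> \<beta>' = True" by blast
      from istep_seq[OF st2] nb0 L nb obtain x2 y2 z2 where
        s2: "sstep c r2 m2 ob2 x2 y2 z2" and h2: "d2 \<noteq> Some DForce \<longrightarrow> x2 = c2 \<and> y2 = r2a \<and> z2 = m2a"
        by blast
      have "d \<noteq> Some DForce" using f1 nb by blast
      with h1 h2 dd s1 s2 L oo have "sstep c r m ob c' r' m'" "sstep c r2 m2 ob c' r2a m2a" by auto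
      from seq_equiv_step[OF this] isStep.prems(5) nb0 show "seq_equiv c' r' m' c' r2a m2a" by simp
    qed
    have "Os = Os2"
      using isStep.IH[of r2a m2a Os2] isStep(4) DD L SE by blast
    with oo isStep(2) show ?thesis by simp
  qed
qed

theorem lemma5p4:
  assumes "typed P PA True c"
    and "sim_P P r1 r2"
    and "sim_PA PA m1 m2"
    and "seq_equiv c r1 m1 c r2 m2"
  shows "ideal_equiv P c r1 m1 False c r2 m2 False"
  unfolding ideal_equiv_def
proof (intro allI impI)
  fix D O1 O2 c1' r1' m1' b1' c2' r2' m2' b2'
  assume a: "isteps P c r1 m1 False D O1 c1' r1' m1' b1'"
    and b: "isteps P c r2 m2 False D O2 c2' r2' m2' b2'"
  show "O1 = O2"
    by (rule main[OF a b assms(1-3)]) (simp add: assms(4))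
qed

end
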